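(* Let $\psi:\mathbb{H}\to\mathbb{H}$ be a linear isometry. The pair $(\varphi,\psi)=(I_{\mathbb{H}},\psi)$ satisfies (i) $\varphi(\varphi(x)x)=\varphi(x)x$ for all $x$, (ii) $\varphi(\bar x\psi(x))=\bar x\psi(x)$ for all $x$, (iii) $\psi(\psi(y)\bar x+y\varphi(x))=\psi(y)\bar x+y\varphi(x)$ for all $x,y$, if and only if $\psi\in\{I_{\mathbb{H}}\}\cup\{-T_{a,a}\circ\sigma_{\mathbb{H}}: a\in\mathbb{H},\ |a|=1\}$.
   Context: $T_{a,b}(x)=axb$ and $\sigma_{\mathbb{H}}(x)=\bar x$ on the quaternions $\mathbb{H}$; $I_{\mathbb{H}}$ is the identity. *)

theory Defs
  imports "HOL-Analysis.Analysis"
begin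

datatype quat = Quat (Re: real) (Im1: real) (Im2: real) (Im3: real)

lemma quat_eq_iff: "x = y \<longleftrightarrow> Re x = Re y \<and> Im1 x = Im1 y \<and> Im2 x = Im2 y \<and> Im3 x = Im3 y"
  by (cases x; cases y) auto

instantiation quat :: ring_1
begin
definition "0 = Quat 0 0 0 0"
definition "1 = Quat 1 0 0 0"
definition "x + y = Quat (Re x + Re y) (Im1 x + Im1 y) (Im2 x + Im2 y) (Im3 x + Im3 y)"
definition "x - y = Quat (Re x - Re y) (Im1 x - Im1 y) (Im2 x - Im2 y) (Im3 x - Im3 y)"
definition "- x = Quat (- Re x) (- Im1 x) (- Im2 x) (- Im3 x)"
definition "x * y = Quat
  (Re x * Re y - Im1 x * Im1 y - Im2 x * Im2 y - Im3 x * Im3 y)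
  (Re x * Im1 y + Im1 x * Re y + Im2 x * Im3 y - Im3 x * Im2 y)
  (Re x * Im2 y - Im1 x * Im3 y + Im2 x * Re y + Im3 x * Im1 y)
  (Re x * Im3 y + Im1 x * Im2 y - Im2 x * Im1 y + Im3 x * Re y)"
instance
  by standard (auto simp: quat_eq_iff zero_quat_def one_quat_def plus_quat_def
      minus_quat_def uminus_quat_def times_quat_def algebra_simps)
end

instantiation quat :: real_vector
begin
definition "scaleR r x = Quat (r * Re x) (r * Im1 x) (r * Im2 x) (r * Im3 x)"
instance
  by standard (auto simp: quat_eq_iff scaleR_quat_def plus_quat_def algebra_simps)
end

definition cnj :: "quat \<Rightarrow> quat" where
  "cnj x = Quat (Re x) (- Im1 x) (- Im2 x) (- Im3 x)"

definition qnorm :: "quat \<Rightarrow> real" where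
  "qnorm x = sqrt ((Re x)\<^sup>2 + (Im1 x)\<^sup>2 + (Im2 x)\<^sup>2 + (Im3 x)\<^sup>2)"

definition T :: "quat \<Rightarrow> quat \<Rightarrow> quat \<Rightarrow> quat" where
  "T a b x = a * x * b"

end

theory Submission
  imports Defs
begin

definition NN :: "quat \<Rightarrow> real" where
  "NN x = (Re x)\<^sup>2 + (Im1 x)\<^sup>2 + (Im2 x)\<^sup>2 + (Im3 x)\<^sup>2"

definition ip :: "quat \<Rightarrow> quat \<Rightarrow> real" where
  "ip x y = Re x * Re y + Im1 x * Im1 y + Im2 x * Im2 y + Im3 x * Im3 y"

lemmas qdefs = quat_eq_iff zero_quat_def one_quat_def plus_quat_def
      minus_quat_def uminus_quat_def times_quat_def scaleR_quat_def cnj_def NN_def ip_def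

lemma cnj_cnj[simp]: "cnj (cnj x) = x" by (cases x) (simp add: cnj_def)

lemma NN_scale: "NN (c *\<^sub>R x) = c\<^sup>2 * NN x"
  by (simp add: NN_def scaleR_quat_def power_mult_distrib algebra_simps)

lemma NN_nonneg: "NN x \<ge> 0" by (simp add: NN_def)

lemma qnorm_NN: "qnorm x = sqrt (NN x)" by (simp add: qnorm_def NN_def)

lemma NN_zero: "NN x = 0 \<longleftrightarrow> x = 0"
  by (cases x) (simp add: NN_def zero_quat_def add_nonneg_eq_0_iff)

lemma NN_add: "NN (x + y) = NN x + NN y + 2 * ip x y"
  by (simp add: qdefs power2_eq_square algebra_simps)

lemma ip_sym: "ip x y = ip y x" by (simp add: ip_def algebra_simps)

lemma ip_diff: "ip (a - b) c = ip a c - ip b c"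
  by (simp add: qdefs algebra_simps)

lemma ip_add: "ip (a + b) c = ip a c + ip b c"
  by (simp add: qdefs algebra_simps)

lemma ip_self: "ip x x = NN x" by (simp add: qdefs power2_eq_square)

lemma ip_rc: "ip (p * cnj x) d = ip p (d * x)"
  by (simp add: qdefs algebra_simps)

lemma ip_r: "ip (y * x) d = ip y (d * cnj x)"
  by (simp add: qdefs algebra_simps)

lemma NN_mult: "NN (x * y) = NN x * NN y"
  by (simp add: qdefs power2_eq_square algebra_simps)

lemma NN_cnj: "NN (cnj x) = NN x" by (simp add: qdefs)

lemma mult_cnj_mult: "d * cnj (cnj z * d) = NN d *\<^sub>R z"
  by (simp add: qdefs power2_eq_square algebra_simps)

lemma cnj_scale: "d * cnj (c *\<^sub>R q) = c *\<^sub>R (d * cnj q)"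
  by (simp add: qdefs algebra_simps)

lemma mult_scale: "(d::quat) * (c *\<^sub>R q) = c *\<^sub>R (d * q)"
  by (simp add: qdefs algebra_simps)

lemma scale_mult_scale: "(c *\<^sub>R (d::quat)) * q * (c *\<^sub>R d) = (c*c) *\<^sub>R (d * q * d)"
  by (simp add: qdefs algebra_simps)

lemma fwd_ident:
  "- (a * cnj (- (a * cnj y * a) * cnj x + y * x) * a) - (- (a * cnj y * a) * cnj x + y * x)
   = (NN a - 1) *\<^sub>R (a * x * cnj a * y + y * x)"
  by (simp add: qdefs power2_eq_square algebra_simps)

theorem lemma10:
  fixes \<phi> \<psi> :: "quat \<Rightarrow> quat"
  assumes "\<phi> = id"
    and "linear \<psi>"
    and "\<forall>x. qnorm (\<psi> x) = qnorm x"
  shows "((\<forall>x. \<phi> (\<phi> x * x) = \<phi> x * x)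
          \<and> (\<forall>x. \<phi> (cnj x * \<psi> x) = cnj x * \<psi> x)
          \<and> (\<forall>x y. \<psi> (\<psi> y * cnj x + y * \<phi> x) = \<psi> y * cnj x + y * \<phi> x))
         \<longleftrightarrow> (\<psi> = id \<or> (\<exists>a. qnorm a = 1 \<and> \<psi> = (\<lambda>x. - (T a a \<circ> cnj) x)))"
proof -
  have Npsi: "NN (\<psi> x) = NN x" for x
    using assms(3) NN_nonneg by (simp add: qnorm_NN)
  have lin: "\<psi> (x + y) = \<psi> x + \<psi> y" "\<psi> (x - y) = \<psi> x - \<psi> y" for x y
    using assms(2) by (simp_all add: linear_add linear_diff)
  have ippsi: "ip (\<psi> x) (\<psi> y) = ip x y" for x y
    using NN_add[of x y] NN_add[of "\<psi> x" "\<psi> y"] Npsi[of "x+y"] Npsi[of x] Npsi[of y] lin(1)[of x y]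
    by simp
  have iii: "(\<forall>x y. \<psi> (\<psi> y * cnj x + y * x) = \<psi> y * cnj x + y * x)
      \<longleftrightarrow> (\<psi> = id \<or> (\<exists>a. qnorm a = 1 \<and> \<psi> = (\<lambda>x. - (T a a \<circ> cnj) x)))"
  proof
    assume H: "\<forall>x y. \<psi> (\<psi> y * cnj x + y * x) = \<psi> y * cnj x + y * x"
    show "\<psi> = id \<or> (\<exists>a. qnorm a = 1 \<and> \<psi> = (\<lambda>x. - (T a a \<circ> cnj) x))"
    proof (cases "\<psi> = id")
      case True then show ?thesis by simp
    next
      case False
      then obtain x0 where x0: "\<psi> x0 \<noteq> x0" by (metis eq_id_iff)
      define d where "d = x0 - \<psi> x0"
      have d0: "d \<noteq> 0" using x0 by (simp add: d_def)
      have Nd: "NN d > 0" using d0 NN_zero NN_nonneg by (metis less_eq_real_def)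
      have orth: "ip f d = 0" if "\<psi> f = f" for f
      proof -
        have "ip f d = ip d f" by (rule ip_sym)
        also have "\<dots> = ip x0 f - ip (\<psi> x0) (\<psi> f)" using that by (simp add: d_def ip_diff)
        also have "\<dots> = 0" by (simp add: ippsi)
        finally show ?thesis .
      qed
      have key: "\<psi> (d * cnj x) = - (d * x)" for x
      proof -
        let ?y = "d * cnj x"
        have "ip (\<psi> ?y * cnj x + ?y * x) d = 0" using H orth by blast
        hence e: "ip (\<psi> ?y) (d * x) + NN ?y = 0"
          by (simp add: ip_add ip_rc ip_r ip_self cnj_cnj)
        have "NN (\<psi> ?y + d * x) = NN ?y + NN (d*x) + 2 * ip (\<psi> ?y) (d * x)"
          by (simp add: NN_add Npsi)
        also have "\<dots> = 0" using e by (simp add: NN_mult NN_cnj)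
        finally have "\<psi> ?y + d * x = 0" by (simp add: NN_zero)
        thus ?thesis by (simp add: eq_neg_iff_add_eq_0)
      qed
      define a where "a = (1 / sqrt (NN d)) *\<^sub>R d"
      have "NN a = 1"
        using Nd by (simp add: a_def NN_scale power_divide)
      hence "qnorm a = 1" by (simp add: qnorm_NN)
      moreover have "\<psi> = (\<lambda>x. - (T a a \<circ> cnj) x)"
      proof
        fix z
        define x where "x = (1 / NN d) *\<^sub>R (cnj z * d)"
        have dz: "d * cnj x = z" using Nd by (simp add: x_def cnj_scale mult_cnj_mult)
        have "\<psi> z = - (d * x)" using key[of x] dz by simp
        also have "\<dots> = - ((1 / NN d) *\<^sub>R (d * cnj z * d))"
          by (simp add: x_def mult_scale mult.assoc)
        also have "\<dots> = - (T a a \<circ> cnj) z"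
          using Nd by (simp add: T_def a_def scale_mult_scale)
        finally show "\<psi> z = - (T a a \<circ> cnj) z" .
      qed
      ultimately show ?thesis by blast
    qed
  next
    assume "\<psi> = id \<or> (\<exists>a. qnorm a = 1 \<and> \<psi> = (\<lambda>x. - (T a a \<circ> cnj) x))"
    then show "\<forall>x y. \<psi> (\<psi> y * cnj x + y * x) = \<psi> y * cnj x + y * x"
    proof
      assume "\<psi> = id" then show ?thesis by simp
    next
      assume "\<exists>a. qnorm a = 1 \<and> \<psi> = (\<lambda>x. - (T a a \<circ> cnj) x)"
      then obtain a where a: "qnorm a = 1" "\<psi> = (\<lambda>x. - (T a a \<circ> cnj) x)" by blast
      have "NN a = 1" using a(1) NN_nonneg by (simp add: qnorm_NN)
      show ?thesis
      proof (intro allI)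
        fix x y
        have "- (a * cnj (- (a * cnj y * a) * cnj x + y * x) * a) - (- (a * cnj y * a) * cnj x + y * x) = 0"
          using fwd_ident[of a y x] \<open>NN a = 1\<close> by (simp add: qdefs)
        thus "\<psi> (\<psi> y * cnj x + y * x) = \<psi> y * cnj x + y * x"
          using a(2) by (simp add: T_def)
      qed
    qed
  qed
  show ?thesis using iii assms(1) by simp
qed

end
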